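(* In the setting below, for every $\ell\ge1$, $$\operatorname{rank}(q_\ell\otimes k)=\binom{n+\ell-1}{\ell}\binom{m-n}{\ell},$$ with the convention $\binom{a}{b}=0$ if $b>a$ (so $q_\ell\otimes k=0$ for $\ell\ge m-n+1$).
   Context: Setting: $R=k[x_{ij}\mid1\le i\le n,1\le j\le m]$ over a field $k$, $n\le m$; $F$ free with basis $f_1,\dots,f_m$, $G$ free with basis $g_1,\dots,g_n$, dual basis $g_i^*$; $D_\ell(G^* )$ the divided power with basis $g^{*(\alpha)}=g_1^{*(\alpha_1)}\cdots g_n^{*(\alpha_n)}$, $|\alpha|=\ell$. Fix $\sigma=(\sigma_1<\dots<\sigma_n)\subseteq[m]$, $f_\sigma=f_{\sigma_1}\wedge\cdots\wedge f_{\sigma_n}$. $U$ is free with basis $e_{ij}$, $1\le i\le n$, $j\notin\sigma$, $e_{(i,j)}=e_{ij}$. For $\tau=(\tau_1<\dots<\tau_\ell)$ and $\alpha\in\mathbb Z^n_{\ge 0}$, $\mathcal L_{\alpha,\tau}$ is the set of sets $L=\{(r_1,\tau_1),\dots,(r_\ell,\tau_\ell)\}$ with $r_s\in\{i:\alpha_i\neq 0\}$ and $|\{s:r_s=j\}|=\alpha_j$ for all $j$, written $L=(L_1,\dots,L_\ell)$, $L_s=(r_s,\tau_s)$. The map $q_\ell:D_\ell(G^* )\otimes\bigwedge^{n+\ell}F\to\bigwedge^\ell U$ sends $g^{*(\alpha)}\otimes f_{\tau_1}\wedge\cdots\wedge f_{\tau_\ell}\wedge f_\sigma\mapsto\sum_{L\in\mathcal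 L_{\alpha,\tau}}e_{L_1}\wedge\cdots\wedge e_{L_\ell}$ for $\tau\cap\sigma=\varnothing$, $|\alpha|=\ell$, and sends each basis element $g^{*(\alpha)}\otimes f_\rho$ with $\rho\not\supseteq\sigma$ to $0$. *)

theory Defs
  imports Complex_Main "HOL-Library.Function_Algebras"
begin

text \<open>Index set of the standard k-basis of D_l(G^*) (x) /\^(n+l) F:
  pairs (alpha, rho), alpha a multi-index supported on {1..n} with |alpha| = l
  (basis element g^{*(alpha)}), rho an (n+l)-subset of {1..m}.
  For rho containing sigma the corresponding basis vector is taken to be
  g^{*(alpha)} (x) f_tau /\ f_sigma with tau = rho - sigma (this differs from
  g^{*(alpha)} (x) f_rho only by a sign), otherwise g^{*(alpha)} (x) f_rho.\<close>
definition dom_index :: "nat \<Rightarrow> nat \<Rightarrow> nat \<Rightarrow> ((nat \<Rightarrow> nat) \<times> nat set) set" where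
  "dom_index n m l = {(\<alpha>, \<rho>). (\<forall>i. \<alpha> i \<noteq> 0 \<longrightarrow> i \<in> {1..n}) \<and> (\<Sum>i\<in>{1..n}. \<alpha> i) = l
                          \<and> \<rho> \<subseteq> {1..m} \<and> card \<rho> = n + l}"

definition L_set :: "(nat \<Rightarrow> nat) \<Rightarrow> nat set \<Rightarrow> (nat \<times> nat) set set" where
  "L_set \<alpha> \<tau> = {L. snd ` L \<subseteq> \<tau> \<and> (\<forall>j\<in>\<tau>. \<exists>!r. (r, j) \<in> L)
                   \<and> (\<forall>p\<in>L. \<alpha> (fst p) \<noteq> 0) \<and> (\<forall>i. card {j. (i, j) \<in> L} = \<alpha> i)}"

text \<open>Basis of /\^l U over k: l-subsets S of {1..n} x ({1..m} - sigma), where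
  e_S is the wedge of its elements listed in increasing order of the column
  index j (for fixed j, by increasing i).  With this ordering
  e_{L_1} /\ ... /\ e_{L_l} = e_L exactly, since tau_1 < ... < tau_l.
  q_col gives the image under q_l (x) k of a domain basis vector, as a
  coordinate vector (function from l-subsets to k).\<close>
definition q_col :: "nat set \<Rightarrow> (nat \<Rightarrow> nat) \<times> nat set \<Rightarrow> (nat \<times> nat) set \<Rightarrow> 'a::field" where
  "q_col \<sigma> c S = (if \<sigma> \<subseteq> snd c \<and> S \<in> L_set (fst c) (snd c - \<sigma>) then 1 else 0)"

definition col_rank :: "('i \<Rightarrow> 'r \<Rightarrow> 'a::field) \<Rightarrow> 'i set \<Rightarrow> nat" where
  "col_rank M I = vector_space.dim (\<lambda>c f r. c * f r) (M ` I)"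

end

theory Submission imports Defs "HOL-Library.Multiset" begin

lemma L_set_det:
  assumes "L \<in> L_set \<alpha> \<tau>"
  shows "\<tau> = snd ` L" "\<alpha> = (\<lambda>i. card {j. (i,j) \<in> L})"
proof -
  show "\<tau> = snd ` L"
  proof
    show "snd ` L \<subseteq> \<tau>" using assms by (simp add: L_set_def)
    show "\<tau> \<subseteq> snd ` L"
    proof
      fix j assume "j \<in> \<tau>"
      then obtain r where "(r,j) \<in> L" using assms unfolding L_set_def by blast
      then show "j \<in> snd ` L" by force
    qed
  qed
  show "\<alpha> = (\<lambda>i. card {j. (i,j) \<in> L})" using assms by (simp add: L_set_def fun_eq_iff)
qed

lemma L_set_nonempty:
  assumes fin: "finite \<tau>" and supp: "\<forall>i. \<alpha> i \<noteq> 0 \<longrightarrow> i \<in> {1..n}"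
    and sm: "(\<Sum>i\<in>{1..n}. \<alpha> i) = card \<tau>"
  shows "\<exists>L. L \<in> L_set \<alpha> \<tau>"
proof -
  define P where "P = Sigma {1..n} (\<lambda>i. {..<\<alpha> i})"
  have finP: "finite P" unfolding P_def by auto
  have "card P = card \<tau>" unfolding P_def using sm by (simp add: card_SigmaI)
  then obtain f where f: "bij_betw f \<tau> P" using finite_same_card_bij[OF fin finP] by metis
  define L where "L = (\<lambda>j. (fst (f j), j)) ` \<tau>"
  have fP: "f j \<in> P" if "j \<in> \<tau>" for j using f that by (auto simp: bij_betw_def)
  have memL: "(r,j) \<in> L \<longleftrightarrow> j \<in> \<tau> \<and> r = fst (f j)" for r j unfolding L_def by auto
  have fib: "{j. (i,j) \<in> L} = {j \<in> \<tau>. fst (f j) = i}" for i using memL by auto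
  have "card {j. (i,j) \<in> L} = \<alpha> i" for i
  proof (cases "i \<in> {1..n}")
    case True
    have inj: "inj_on f {j \<in> \<tau>. fst (f j) = i}" using f by (auto simp: bij_betw_def inj_on_def)
    have img: "f ` {j \<in> \<tau>. fst (f j) = i} = {i} \<times> {..<\<alpha> i}"
    proof
      show "f ` {j \<in> \<tau>. fst (f j) = i} \<subseteq> {i} \<times> {..<\<alpha> i}"
        using fP unfolding P_def by force
      show "{i} \<times> {..<\<alpha> i} \<subseteq> f ` {j \<in> \<tau>. fst (f j) = i}"
      proof
        fix p assume p: "p \<in> {i} \<times> {..<\<alpha> i}"
        then have "p \<in> P" using True unfolding P_def by auto
        then obtain j where "j \<in> \<tau>" "f j = p" using f by (auto simp: bij_betw_def)
        then show "p \<in> f ` {j \<in> \<tau>. fst (f j) = i}" using p by force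
      qed
    qed
    have "card {j \<in> \<tau>. fst (f j) = i} = card ({i} \<times> {..<\<alpha> i})"
      using card_image[OF inj] img by simp
    then show ?thesis using fib by simp
  next
    case False
    have e: "{j \<in> \<tau>. fst (f j) = i} = {}" using fP False unfolding P_def by force
    have "\<alpha> i = 0" using False supp by blast
    then show ?thesis unfolding fib e by simp
  qed
  moreover have "\<alpha> (fst p) \<noteq> 0" if "p \<in> L" for p
  proof -
    obtain j where "j \<in> \<tau>" "p = (fst (f j), j)" using \<open>p \<in> L\<close> L_def by auto
    then show ?thesis using fP[of j] unfolding P_def by (cases "f j") auto
  qed
  moreover have "snd ` L \<subseteq> \<tau>" unfolding L_def by auto
  moreover have "\<forall>j\<in>\<tau>. \<exists>!r. (r, j) \<in> L" using memL by auto
  ultimately have "L \<in> L_set \<alpha> \<tau>" unfolding L_set_def by auto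
  then show ?thesis by blast
qed

lemma card_alphas:
  "card {\<alpha>::nat\<Rightarrow>nat. (\<forall>i. \<alpha> i \<noteq> 0 \<longrightarrow> i \<in> {1..n}) \<and> (\<Sum>i\<in>{1..n}. \<alpha> i) = l} = (n + l - 1 choose l)"
proof -
  let ?A = "{\<alpha>::nat\<Rightarrow>nat. (\<forall>i. \<alpha> i \<noteq> 0 \<longrightarrow> i \<in> {1..n}) \<and> (\<Sum>i\<in>{1..n}. \<alpha> i) = l}"
  have eq: "?A = count ` multisets_of_size {1..n} l"
  proof
    show "count ` multisets_of_size {1..n} l \<subseteq> ?A"
    proof
      fix a assume "a \<in> count ` multisets_of_size {1..n} l"
      then obtain M where M: "set_mset M \<subseteq> {1..n}" "size M = l" "a = count M"
        unfolding multisets_of_size_def by blast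
      have z: "count M i = 0" if "i \<notin> set_mset M" for i using that by (simp add: not_in_iff)
      have "sum (count M) {1..n} = sum (count M) (set_mset M)"
        by (rule sum.mono_neutral_right) (use M z in auto)
      also have "\<dots> = l" using M(2) by (simp add: size_multiset_overloaded_eq)
      finally have s: "sum a {1..n} = l" unfolding M(3) .
      have "\<forall>i. a i \<noteq> 0 \<longrightarrow> i \<in> {1..n}"
      proof (intro allI impI)
        fix i assume "a i \<noteq> 0"
        then have "i \<in> set_mset M" using z M(3) by metis
        then show "i \<in> {1..n}" using M(1) by (rule subsetD[rotated])
      qed
      then show "a \<in> ?A" using s by blast
    qed
    show "?A \<subseteq> count ` multisets_of_size {1..n} l"
    proof
      fix a assume a: "a \<in> ?A"
      have fin: "finite {x. a x > 0}" by (rule finite_subset[of _ "{1..n}"]) (use a in auto)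
      define M where "M = Abs_multiset a"
      have cM: "count M = a" unfolding M_def using count_Abs_multiset[OF fin] .
      have sM: "set_mset M \<subseteq> {1..n}"
      proof
        fix x assume "x \<in> set_mset M"
        then have "count M x \<noteq> 0" by (simp add: not_in_iff)
        then show "x \<in> {1..n}" using a cM by blast
      qed
      have "sum (count M) {1..n} = sum (count M) (set_mset M)"
        by (rule sum.mono_neutral_right) (use sM in \<open>auto simp: not_in_iff\<close>)
      then have "size M = l" using a cM by (simp add: size_multiset_overloaded_eq)
      then show "a \<in> count ` multisets_of_size {1..n} l"
        using cM sM unfolding multisets_of_size_def by blast
    qed
  qed
  have "inj_on count (multisets_of_size {1..n} l)" by (auto simp: inj_on_def multiset_eq_iff)
  then have "card ?A = card (multisets_of_size {1..n} l)" using eq card_image by metis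
  also have "\<dots> = (n + l - 1 choose l)" by (simp add: card_multisets_of_size)
  finally show ?thesis .
qed


lemma vs: "vector_space (\<lambda>c (f::'r\<Rightarrow>'a::field) r. c * f r)"
  by unfold_locales (simp_all add: fun_eq_iff distrib_left distrib_right mult.assoc)

lemma sum_app: "(sum f S) x = (\<Sum>s\<in>S. f s x)"
  by (induction S rule: infinite_finite_induct) auto

theorem lemma4p13:
  fixes n m l :: nat and \<sigma> :: "nat set"
  assumes "n \<le> m" and "\<sigma> \<subseteq> {1..m}" and "card \<sigma> = n" and "l \<ge> 1"
  shows "col_rank (q_col \<sigma> :: _ \<Rightarrow> _ \<Rightarrow> 'a::field) (dom_index n m l)
           = (n + l - 1 choose l) * (m - n choose l)"
proof -
  interpret V: vector_space "\<lambda>c (f::(nat\<times>nat) set\<Rightarrow>'a) r. c * f r" by (rule vs)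
  let ?q = "q_col \<sigma> :: _ \<Rightarrow> _ \<Rightarrow> 'a"
  define D where "D = dom_index n m l"
  define J where "J = {c \<in> D. \<sigma> \<subseteq> snd c}"
  have finS: "finite \<sigma>" using assms(2) finite_subset by blast
  have ne: "\<exists>L. L \<in> L_set (fst c) (snd c - \<sigma>)" if "c \<in> J" for c
  proof -
    obtain \<alpha> \<rho> where c: "c = (\<alpha>, \<rho>)" by force
    have r: "\<rho> \<subseteq> {1..m}" "card \<rho> = n + l" "\<sigma> \<subseteq> \<rho>"
      and a: "\<forall>i. \<alpha> i \<noteq> 0 \<longrightarrow> i \<in> {1..n}" "(\<Sum>i\<in>{1..n}. \<alpha> i) = l"
      using that unfolding J_def D_def dom_index_def c by auto
    have fr: "finite \<rho>" using r(1) finite_subset by blast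
    have "card (\<rho> - \<sigma>) = l" using r fr finS assms(3) by (simp add: card_Diff_subset)
    then show ?thesis using L_set_nonempty[of "\<rho> - \<sigma>" \<alpha> n] a fr c by auto
  qed
  have uniq: "c = c'" if "c \<in> J" "c' \<in> J" "L \<in> L_set (fst c) (snd c - \<sigma>)"
     "L \<in> L_set (fst c') (snd c' - \<sigma>)" for c c' L
  proof -
    have "snd c - \<sigma> = snd c' - \<sigma>" "fst c = fst c'"
      using L_set_det[OF that(3)] L_set_det[OF that(4)] by auto
    moreover have "\<sigma> \<subseteq> snd c" "\<sigma> \<subseteq> snd c'" using that(1,2) J_def by auto
    ultimately have "snd c = snd c'" by blast
    with \<open>fst c = fst c'\<close> show ?thesis by (simp add: prod_eq_iff)
  qed
  have qJ1: "?q c L = (if L \<in> L_set (fst c) (snd c - \<sigma>) then 1 else 0)" if "c \<in> J" for c L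
    using that by (simp add: q_col_def J_def)
  have q0: "?q c = 0" if "c \<in> D" "c \<notin> J" for c
    using that by (auto simp: q_col_def J_def fun_eq_iff)
  have inj: "inj_on ?q J"
  proof
    fix c c' assume cc: "c \<in> J" "c' \<in> J" "?q c = ?q c'"
    obtain L where L: "L \<in> L_set (fst c) (snd c - \<sigma>)" using ne[OF cc(1)] by blast
    have "?q c' L = 1" using cc qJ1[OF cc(1), of L] L by simp
    then have "L \<in> L_set (fst c') (snd c' - \<sigma>)" using qJ1[OF cc(2), of L] by (auto split: if_splits)
    then show "c = c'" using uniq cc L by blast
  qed
  have indep: "V.independent (?q ` J)"
    unfolding V.independent_explicit_finite_subsets
  proof (intro allI impI ballI)
    fix S u v assume S: "S \<subseteq> ?q ` J" "finite S" and sum0: "(\<Sum>v\<in>S. (\<lambda>r. u v * v r)) = 0" and v: "v \<in> S"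
    obtain c where c: "c \<in> J" "v = ?q c" using S v by blast
    obtain L where L: "L \<in> L_set (fst c) (snd c - \<sigma>)" using ne[OF c(1)] by blast
    have w: "w L = (if w = v then 1 else 0)" if wS: "w \<in> S" for w
    proof -
      obtain c' where c': "c' \<in> J" "w = ?q c'" using S wS by blast
      show ?thesis
      proof (cases "L \<in> L_set (fst c') (snd c' - \<sigma>)")
        case True
        then have "c' = c" using uniq c c' L by blast
        then show ?thesis using c c' qJ1 L by simp
      next
        case False
        then have "w L = 0" using qJ1[OF c'(1)] c' by simp
        moreover have "w \<noteq> v" using False L c c' qJ1 by (metis one_neq_zero)
        ultimately show ?thesis by simp
      qed
    qed
    have "0 = (\<Sum>w\<in>S. (\<lambda>r. u w * w r)) L" using sum0 by simp
    also have "\<dots> = (\<Sum>w\<in>S. u w * w L)" by (simp add: sum_app)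
    also have "\<dots> = (\<Sum>w\<in>S. if w = v then u w else 0)" by (rule sum.cong) (auto simp: w)
    also have "\<dots> = u v" using v S(2) by simp
    finally show "u v = 0" by simp
  qed
  have spaneq: "V.span (?q ` D) = V.span (?q ` J)"
  proof (rule subset_antisym)
    have "?q ` D \<subseteq> insert 0 (?q ` J)" using q0 by auto
    then have "V.span (?q ` D) \<subseteq> V.span (insert 0 (?q ` J))" by (rule V.span_mono)
    then show "V.span (?q ` D) \<subseteq> V.span (?q ` J)" by simp
    show "V.span (?q ` J) \<subseteq> V.span (?q ` D)" by (rule V.span_mono) (auto simp: J_def)
  qed
  have "col_rank ?q D = V.dim (?q ` D)" by (simp add: col_rank_def)
  also have "\<dots> = V.dim (?q ` J)" by (metis V.dim_span spaneq)
  also have "\<dots> = card (?q ` J)" using V.dim_eq_card_independent[OF indep] .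
  also have "\<dots> = card J" using card_image[OF inj] .
  also have "\<dots> = (n + l - 1 choose l) * (m - n choose l)"
  proof -
    define A where "A = {\<alpha>::nat\<Rightarrow>nat. (\<forall>i. \<alpha> i \<noteq> 0 \<longrightarrow> i \<in> {1..n}) \<and> (\<Sum>i\<in>{1..n}. \<alpha> i) = l}"
    define T where "T = {\<tau>. \<tau> \<subseteq> {1..m} - \<sigma> \<and> card \<tau> = l}"
    have Jeq: "J = (\<lambda>(\<alpha>,\<tau>). (\<alpha>, \<tau> \<union> \<sigma>)) ` (A \<times> T)"
    proof
      show "J \<subseteq> (\<lambda>(\<alpha>,\<tau>). (\<alpha>, \<tau> \<union> \<sigma>)) ` (A \<times> T)"
      proof
        fix c assume "c \<in> J"
        obtain \<alpha> \<rho> where c: "c = (\<alpha>, \<rho>)" by force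
        have r: "\<rho> \<subseteq> {1..m}" "card \<rho> = n + l" "\<sigma> \<subseteq> \<rho>"
          and a: "\<forall>i. \<alpha> i \<noteq> 0 \<longrightarrow> i \<in> {1..n}" "(\<Sum>i\<in>{1..n}. \<alpha> i) = l"
          using \<open>c \<in> J\<close> unfolding J_def D_def dom_index_def c by auto
        have fr: "finite \<rho>" using r(1) finite_subset by blast
        have "card (\<rho> - \<sigma>) = l" using r fr finS assms(3) by (simp add: card_Diff_subset)
        then have "\<rho> - \<sigma> \<in> T" using r(1) unfolding T_def by blast
        moreover have "\<alpha> \<in> A" using a unfolding A_def by blast
        ultimately have mem: "(\<alpha>, \<rho> - \<sigma>) \<in> A \<times> T" by blast
        have "\<rho> = (\<rho> - \<sigma>) \<union> \<sigma>" using r(3) by blast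
        then have "c = (\<lambda>(\<alpha>,\<tau>). (\<alpha>, \<tau> \<union> \<sigma>)) (\<alpha>, \<rho> - \<sigma>)" using c by simp
        then show "c \<in> (\<lambda>(\<alpha>,\<tau>). (\<alpha>, \<tau> \<union> \<sigma>)) ` (A \<times> T)" using mem by (rule image_eqI)
      qed
      show "(\<lambda>(\<alpha>,\<tau>). (\<alpha>, \<tau> \<union> \<sigma>)) ` (A \<times> T) \<subseteq> J"
      proof
        fix c assume "c \<in> (\<lambda>(\<alpha>,\<tau>). (\<alpha>, \<tau> \<union> \<sigma>)) ` (A \<times> T)"
        then obtain \<alpha> \<tau> where at: "\<alpha> \<in> A" "\<tau> \<in> T" "c = (\<alpha>, \<tau> \<union> \<sigma>)" by auto
        have tsub: "\<tau> \<subseteq> {1..m}" "\<tau> \<inter> \<sigma> = {}" using at(2) unfolding T_def by blast+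
        have ft: "finite \<tau>" using tsub(1) by (rule finite_subset) simp
        have "card (\<tau> \<union> \<sigma>) = l + n" using at(2) ft finS assms(3)
          by (subst card_Un_disjoint) (auto simp: T_def)
        moreover have "\<tau> \<union> \<sigma> \<subseteq> {1..m}" using tsub(1) assms(2) by blast
        moreover have "(\<forall>i. \<alpha> i \<noteq> 0 \<longrightarrow> i \<in> {1..n}) \<and> (\<Sum>i\<in>{1..n}. \<alpha> i) = l"
          using at(1) unfolding A_def by blast
        ultimately have "(\<alpha>, \<tau> \<union> \<sigma>) \<in> D" unfolding D_def dom_index_def by simp
        then show "c \<in> J" unfolding J_def using at(3) by simp
      qed
    qed
    have "inj_on (\<lambda>(\<alpha>,\<tau>). (\<alpha>, \<tau> \<union> \<sigma>)) (A \<times> T)"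
    proof (rule inj_onI, clarsimp)
      fix a t a' t' assume "t \<in> T" "t' \<in> T" "t \<union> \<sigma> = t' \<union> \<sigma>"
      then show "t = t'" unfolding T_def by blast
    qed
    then have "card J = card A * card T" using Jeq card_image card_cartesian_product by metis
    moreover have "card A = (n + l - 1 choose l)" unfolding A_def by (rule card_alphas)
    moreover have "card T = (m - n choose l)"
    proof -
      have "card ({1..m} - \<sigma>) = m - n" using assms(2,3) finS by (simp add: card_Diff_subset)
      then show ?thesis unfolding T_def using n_subsets[of "{1..m} - \<sigma>" l] by simp
    qed
    ultimately show ?thesis by simp
  qed
  finally show ?thesis unfolding D_def .
qed

end
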